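(* Let $S$ be an inverse semigroup. The following are equivalent: (1) $S$ is quasi-finitely generated; (2) $S$ admits a uniformly proper, right-subinvariant, uniformly discrete extended metric whose components are the $\mathcal L$-classes.
   Context: An inverse semigroup is a semigroup $S$ in which every $s$ has a unique $s^{-1}$ with $ss^{-1}s=s$, $s^{-1}ss^{-1}=s^{-1}$; $E(S)$ denotes its idempotents. Green's relation $\mathcal L$: $(s,t)\in\mathcal L$ iff $s^{-1}s=t^{-1}t$. $S$ is quasi-finitely generated if there is a finite subset $\mathcal M=\mathcal M^{-1}$ with $S$ generated as a semigroup by $\mathcal M\cup E(S)$. An extended metric $d$ on $S$ (distances may be $\infty$) has components the $\mathcal L$-classes if $d(s,t)<\infty$ iff $(s,t)\in\mathcal L$. It is uniformly discrete if $\inf_{s\ne t}d(s,t)>0$; right-subinvariant if $d(sx,tx)\le d(s,t)$ for all $s,t,x\in S$; uniformly proper if there is a finite $F_1\subseteq S$ such that for every $r\ge0$ and all $x\ne y$ in $S$ with $d(x,y)\le r$ there is $f$, a product of at most $\lceil r\rceil$ elements of $F_1$, with $y=fx$. *)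

theory Defs
  imports Main "HOL-Library.Extended_Nonnegative_Real"
begin

class inverse_semigroup = semigroup_mult +
  assumes unique_inverse: "\<forall>s. \<exists>!t. s * t * s = s \<and> t * s * t = t"

definition isinv :: "'a::inverse_semigroup \<Rightarrow> 'a" where
  "isinv s = (THE t. s * t * s = s \<and> t * s * t = t)"

definition idems :: "'a::inverse_semigroup set" where
  "idems = {e. e * e = e}"

definition Lrel :: "'a::inverse_semigroup \<Rightarrow> 'a \<Rightarrow> bool" where
  "Lrel s t \<longleftrightarrow> isinv s * s = isinv t * t"

fun lprod :: "'a::semigroup_mult list \<Rightarrow> 'a" where
  "lprod [x] = x"
| "lprod (x # y # xs) = x * lprod (y # xs)"
| "lprod [] = undefined"

definition quasi_finitely_generated :: "'a::inverse_semigroup itself \<Rightarrow> bool" where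
  "quasi_finitely_generated _ \<longleftrightarrow>
     (\<exists>M::'a set. finite M \<and> isinv ` M = M \<and>
        (\<forall>s::'a. \<exists>ws. ws \<noteq> [] \<and> set ws \<subseteq> M \<union> idems \<and> s = lprod ws))"

definition ext_metric :: "('a \<Rightarrow> 'a \<Rightarrow> ennreal) \<Rightarrow> bool" where
  "ext_metric d \<longleftrightarrow>
     (\<forall>x y. d x y = 0 \<longleftrightarrow> x = y) \<and> (\<forall>x y. d x y = d y x) \<and>
     (\<forall>x y z. d x z \<le> d x y + d y z)"

definition components_L_classes :: "('a::inverse_semigroup \<Rightarrow> 'a \<Rightarrow> ennreal) \<Rightarrow> bool" where
  "components_L_classes d \<longleftrightarrow> (\<forall>s t. d s t < \<infinity> \<longleftrightarrow> Lrel s t)"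

definition uniformly_discrete :: "('a \<Rightarrow> 'a \<Rightarrow> ennreal) \<Rightarrow> bool" where
  "uniformly_discrete d \<longleftrightarrow> (INF p \<in> {(s, t). s \<noteq> t}. d (fst p) (snd p)) > 0"

definition right_subinvariant :: "('a::semigroup_mult \<Rightarrow> 'a \<Rightarrow> ennreal) \<Rightarrow> bool" where
  "right_subinvariant d \<longleftrightarrow> (\<forall>s t x. d (s * x) (t * x) \<le> d s t)"

definition uniformly_proper :: "('a::semigroup_mult \<Rightarrow> 'a \<Rightarrow> ennreal) \<Rightarrow> bool" where
  "uniformly_proper d \<longleftrightarrow>
     (\<exists>F1. finite F1 \<and>
        (\<forall>r::real. r \<ge> 0 \<longrightarrow> (\<forall>x y. x \<noteq> y \<and> d x y \<le> ennreal r \<longrightarrow>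
           (\<exists>fs. fs \<noteq> [] \<and> length fs \<le> nat \<lceil>r\<rceil> \<and> set fs \<subseteq> F1 \<and> y = lprod fs * x))))"

end

theory Submission
  imports Defs
begin

lemma isinv_prop:
  fixes s :: "'a::inverse_semigroup"
  shows "s * isinv s * s = s \<and> isinv s * s * isinv s = isinv s"
proof -
  have "\<exists>!t. s * t * s = s \<and> t * s * t = t" using unique_inverse by blast
  then show ?thesis unfolding isinv_def by (rule theI')
qed

lemma isinv1: "(s::'a::inverse_semigroup) * isinv s * s = s"
  using isinv_prop by blast
lemma isinv2: "isinv (s::'a::inverse_semigroup) * s * isinv s = isinv s"
  using isinv_prop by blast

lemma isinv1a: "(s::'a::inverse_semigroup) * (isinv s * s) = s"
  using isinv1 by (metis mult.assoc)
lemma isinv2a: "isinv (s::'a::inverse_semigroup) * (s * isinv s) = isinv s"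
  using isinv2 by (metis mult.assoc)

lemma inv_unique:
  fixes s t :: "'a::inverse_semigroup"
  assumes "s * t * s = s" "t * s * t = t"
  shows "isinv s = t"
proof -
  have "\<exists>!t. s * t * s = s \<and> t * s * t = t" using unique_inverse by blast
  then show ?thesis unfolding isinv_def by (rule the1_equality) (simp add: assms)
qed

lemma isinv_isinv: "isinv (isinv (s::'a::inverse_semigroup)) = s"
  by (rule inv_unique) (simp_all add: isinv1 isinv2)

lemma isinv_idem: "(e::'a::inverse_semigroup) * e = e \<Longrightarrow> isinv e = e"
  by (rule inv_unique) simp_all

lemma idem_mult_idem:
  fixes e f :: "'a::inverse_semigroup"
  assumes e: "e * e = e" and f: "f * f = f"
  shows "(e * f) * (e * f) = e * f"
proof -
  let ?x = "isinv (e * f)"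
  have a: "e * f * ?x * (e * f) = e * f" by (rule isinv1)
  have b: "?x * (e * f) * ?x = ?x" by (rule isinv2)
  have c0: "isinv (e * f) = f * ?x * e"
    proof (rule inv_unique)
      have "e * f * (f * ?x * e) * (e * f) = (e * (f * f)) * ?x * ((e * e) * f)"
        by (simp add: mult.assoc)
      also have "\<dots> = e * f" using a e f by simp
      finally show "e * f * (f * ?x * e) * (e * f) = e * f" .
      have "f * ?x * e * (e * f) * (f * ?x * e) = f * (?x * (e * e) * (f * f) * ?x) * e"
        by (simp add: mult.assoc)
      also have "\<dots> = f * ?x * e" using b e f by (simp add: mult.assoc)
      finally show "f * ?x * e * (e * f) * (f * ?x * e) = f * ?x * e" .
    qed
  have c: "f * ?x * e = ?x" using c0 by simp
  have xx: "?x * ?x = ?x"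
  proof -
    have "?x * ?x = f * (?x * (e * f) * ?x) * e" using c by (metis mult.assoc)
    also have "\<dots> = ?x" using b c by (simp add: mult.assoc)
    finally show ?thesis .
  qed
  have "isinv ?x = ?x" using xx by (rule isinv_idem)
  then have "e * f = ?x" using isinv_isinv by metis
  then show ?thesis using xx by simp
qed

lemma idem_comm:
  fixes e f :: "'a::inverse_semigroup"
  assumes e: "e * e = e" and f: "f * f = f"
  shows "e * f = f * e"
proof -
  have ef: "(e * f) * (e * f) = e * f" using e f by (rule idem_mult_idem)
  have fe: "(f * e) * (f * e) = f * e" using f e by (rule idem_mult_idem)
  have "isinv (e * f) = f * e"
  proof (rule inv_unique)
    have "e * f * (f * e) * (e * f) = (e * f) * (e * f)" using e f by (metis mult.assoc)
    then show "e * f * (f * e) * (e * f) = e * f" using ef by simp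
    have "f * e * (e * f) * (f * e) = (f * e) * (f * e)" using e f by (metis mult.assoc)
    then show "f * e * (e * f) * (f * e) = f * e" using fe by simp
  qed
  moreover have "isinv (e * f) = e * f" using ef by (rule isinv_idem)
  ultimately show ?thesis by simp
qed

lemma idem_r: "(s::'a::inverse_semigroup) * isinv s * (s * isinv s) = s * isinv s"
  by (metis isinv1 mult.assoc)
lemma idem_l: "isinv (s::'a::inverse_semigroup) * s * (isinv s * s) = isinv s * s"
  by (metis isinv2 mult.assoc)

lemma isinv_mult:
  fixes x y :: "'a::inverse_semigroup"
  shows "isinv (x * y) = isinv y * isinv x"
proof (rule inv_unique)
  have c: "y * isinv y * (isinv x * x) = isinv x * x * (y * isinv y)"
    by (rule idem_comm[OF idem_r idem_l])
  have "x * y * (isinv y * isinv x) * (x * y) = x * (y * isinv y * (isinv x * x)) * y"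
    by (simp add: mult.assoc)
  also have "\<dots> = (x * isinv x * x) * (y * isinv y * y)" using c by (simp add: mult.assoc)
  also have "\<dots> = x * y" by (simp add: isinv1)
  finally show "x * y * (isinv y * isinv x) * (x * y) = x * y" .
  have "isinv y * isinv x * (x * y) * (isinv y * isinv x) = isinv y * (isinv x * x * (y * isinv y)) * isinv x"
    by (simp add: mult.assoc)
  also have "\<dots> = isinv y * (y * isinv y * (isinv x * x)) * isinv x" by (simp only: c)
  also have "\<dots> = (isinv y * y * isinv y) * (isinv x * x * isinv x)" by (simp add: mult.assoc)
  also have "\<dots> = isinv y * isinv x" by (simp add: isinv2)
  finally show "isinv y * isinv x * (x * y) * (isinv y * isinv x) = isinv y * isinv x" .
qed


lemma Lrel_right: "Lrel (s::'a::inverse_semigroup) t \<Longrightarrow> Lrel (s * x) (t * x)"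
  unfolding Lrel_def by (simp add: isinv_mult mult.assoc[symmetric]) (simp add: mult.assoc)

lemma Lrel_step_back:
  fixes a y :: "'a::inverse_semigroup"
  assumes "Lrel y (a * y)"
  shows "y = isinv a * (a * y)"
proof -
  have e: "isinv y * y = isinv y * isinv a * (a * y)"
    using assms unfolding Lrel_def by (simp add: isinv_mult mult.assoc)
  have "y = y * (isinv y * y)" by (metis isinv1 mult.assoc)
  also have "\<dots> = (y * isinv y) * (isinv a * a) * y" using e by (simp add: mult.assoc)
  also have "\<dots> = (isinv a * a) * (y * isinv y) * y" by (simp only: idem_comm[OF idem_r[of y] idem_l[of a]])
  also have "\<dots> = isinv a * (a * y)" by (simp add: mult.assoc isinv1a)
  finally show ?thesis .
qed

lemma Lrel_mid:
  fixes a x s :: "'a::inverse_semigroup"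
  assumes x: "x * (isinv s * s) = x" and L: "Lrel s (a * x)"
  shows "Lrel s x"
proof -
  have e: "isinv s * s = isinv x * isinv a * (a * x)"
    using L unfolding Lrel_def by (simp add: isinv_mult mult.assoc)
  have "isinv x * x = isinv x * (x * (isinv s * s))" using x by simp
  also have "\<dots> = (isinv x * x * isinv x) * isinv a * (a * x)" using e by (simp add: mult.assoc)
  also have "\<dots> = isinv s * s" using e by (simp add: isinv2)
  finally show ?thesis unfolding Lrel_def by simp
qed

lemma foldr_right: "foldr (*) ws (s::'a::inverse_semigroup) * (isinv s * s) = foldr (*) ws s"
  by (induction ws) (simp_all add: mult.assoc isinv1a)

lemma foldr_mult: "foldr (*) ws (s::'a::semigroup_mult) * x = foldr (*) ws (s * x)"
  by (induction ws) (simp_all add: mult.assoc)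

lemma lprod_foldr: "ws \<noteq> [] \<Longrightarrow> lprod ws * (s::'a::semigroup_mult) = foldr (*) ws s"
  by (induction ws rule: lprod.induct) (simp_all add: mult.assoc)

lemma lprod_snoc: "ws \<noteq> [] \<Longrightarrow> lprod (ws @ [e]) = lprod ws * (e::'a::semigroup_mult)"
  by (induction ws rule: lprod.induct) (simp_all add: mult.assoc)

lemma filter_word:
  fixes s :: "'a::inverse_semigroup"
  shows "Lrel s (foldr (*) ws s) \<Longrightarrow> set ws \<subseteq> M \<union> idems \<Longrightarrow>
    \<exists>ws'. set ws' \<subseteq> M \<and> length ws' \<le> length ws \<and> foldr (*) ws' s = foldr (*) ws s"
proof (induction ws)
  case Nil
  then show ?case by auto
next
  case (Cons a ws)
  let ?x = "foldr (*) ws s"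
  have Lx: "Lrel s ?x" using Lrel_mid[OF foldr_right] Cons.prems(1) by simp
  obtain ws' where w: "set ws' \<subseteq> M" "length ws' \<le> length ws" "foldr (*) ws' s = ?x"
    using Cons Lx by auto
  show ?case
  proof (cases "a \<in> M")
    case True
    then show ?thesis using w by (intro exI[of _ "a # ws'"]) auto
  next
    case False
    then have aa: "a * a = a" using Cons.prems(2) by (auto simp: idems_def)
    have "Lrel ?x (a * ?x)" using Lx Cons.prems(1) by (simp add: Lrel_def)
    then have "?x = isinv a * (a * ?x)" by (rule Lrel_step_back)
    then have "?x = a * ?x" using aa isinv_idem[OF aa] by (metis mult.assoc)
    then show ?thesis using w by (intro exI[of _ ws']) auto
  qed
qed

lemma word_back:
  fixes s :: "'a::inverse_semigroup"
  shows "Lrel s (foldr (*) ws s) \<Longrightarrow> foldr (*) (rev (map isinv ws)) (foldr (*) ws s) = s"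
proof (induction ws)
  case Nil
  then show ?case by simp
next
  case (Cons a ws)
  let ?x = "foldr (*) ws s"
  have Lx: "Lrel s ?x" using Lrel_mid[OF foldr_right] Cons.prems(1) by simp
  have "Lrel ?x (a * ?x)" using Lx Cons.prems(1) by (simp add: Lrel_def)
  then have "?x = isinv a * (a * ?x)" by (rule Lrel_step_back)
  then show ?case using Cons.IH[OF Lx] by simp
qed

lemma Lrel_word:
  fixes s t :: "'a::inverse_semigroup"
  assumes gen: "\<forall>s::'a. \<exists>ws. ws \<noteq> [] \<and> set ws \<subseteq> M \<union> idems \<and> s = lprod ws"
    and L: "Lrel s t"
  shows "\<exists>ws. set ws \<subseteq> M \<and> t = foldr (*) ws s"
proof -
  have "t = t * (isinv t * t)" by (metis isinv1 mult.assoc)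
  also have "\<dots> = (t * isinv s) * s" using L by (simp add: Lrel_def mult.assoc)
  finally have t: "t = (t * isinv s) * s" .
  obtain gs where g: "gs \<noteq> []" "set gs \<subseteq> M \<union> idems" "t * isinv s = lprod gs"
    using gen by blast
  have tf: "t = foldr (*) gs s" using t g lprod_foldr by metis
  then have "Lrel s (foldr (*) gs s)" using L by simp
  from filter_word[OF this g(2)] tf show ?thesis by metis
qed

definition Wd :: "'a::inverse_semigroup set \<Rightarrow> 'a \<Rightarrow> 'a \<Rightarrow> nat \<Rightarrow> bool" where
  "Wd M s t n \<longleftrightarrow> (\<exists>ws. length ws = n \<and> set ws \<subseteq> M \<and> t = foldr (*) ws s)"

definition dist_of :: "'a::inverse_semigroup set \<Rightarrow> 'a \<Rightarrow> 'a \<Rightarrow> ennreal" where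
  "dist_of M s t = (if Lrel s t then of_nat (LEAST n. Wd M s t n) else \<infinity>)"


context
  fixes M :: "'a::inverse_semigroup set"
  assumes Minv: "isinv ` M = M"
    and gen: "\<forall>s::'a. \<exists>ws. ws \<noteq> [] \<and> set ws \<subseteq> M \<union> idems \<and> s = lprod ws"
begin

lemma Wd_ex: "Lrel s t \<Longrightarrow> \<exists>n. Wd M s t n"
  using Lrel_word[OF gen] unfolding Wd_def by blast

lemma Wd_least: "Lrel s t \<Longrightarrow> Wd M s t (LEAST n. Wd M s t n)"
  using Wd_ex by (rule LeastI_ex)

lemma Wd_sym: "Lrel s t \<Longrightarrow> Wd M s t n \<Longrightarrow> Wd M t s n"
proof -
  assume L: "Lrel s t" and "Wd M s t n"
  then obtain ws where w: "length ws = n" "set ws \<subseteq> M" "t = foldr (*) ws s"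
    unfolding Wd_def by blast
  have "foldr (*) (rev (map isinv ws)) t = s" using word_back L w(3) by metis
  moreover have "set (rev (map isinv ws)) \<subseteq> M" using w(2) Minv by auto
  ultimately show "Wd M t s n" unfolding Wd_def using w(1) by (metis length_map length_rev)
qed

lemma Lrel_sym: "Lrel s t \<Longrightarrow> Lrel t s" by (simp add: Lrel_def)
lemma Lrel_trans: "Lrel s t \<Longrightarrow> Lrel t u \<Longrightarrow> Lrel s u" by (simp add: Lrel_def)
lemma Lrel_refl: "Lrel s s" by (simp add: Lrel_def)

lemma Wd0: "Wd M s t 0 \<longleftrightarrow> s = t"
  unfolding Wd_def by auto

lemma dist_sym: "dist_of M s t = dist_of M t s"
proof (cases "Lrel s t")
  case True
  then have "{n. Wd M s t n} = {n. Wd M t s n}"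
    using Wd_sym Lrel_sym by blast
  then have "(LEAST n. Wd M s t n) = (LEAST n. Wd M t s n)" by (metis mem_Collect_eq)
  then show ?thesis using True Lrel_sym unfolding dist_of_def by simp
next
  case False
  then show ?thesis using Lrel_sym unfolding dist_of_def by metis
qed

lemma dist_zero: "dist_of M s t = 0 \<longleftrightarrow> s = t"
proof
  assume d: "dist_of M s t = 0"
  then have L: "Lrel s t" unfolding dist_of_def by (cases "Lrel s t") simp_all
  then have "(LEAST n. Wd M s t n) = 0" using d unfolding dist_of_def by simp
  then show "s = t" using Wd_least[OF L] Wd0 by metis
next
  assume "s = t"
  then show "dist_of M s t = 0" unfolding dist_of_def using Lrel_refl Wd0
    by (metis (mono_tags, lifting) Least_eq_0 of_nat_0)
qed

lemma dist_ge1: "s \<noteq> t \<Longrightarrow> 1 \<le> dist_of M s t"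
proof (cases "Lrel s t")
  case True
  assume "s \<noteq> t"
  then have "(LEAST n. Wd M s t n) \<noteq> 0" using Wd_least[OF True] Wd0 by metis
  then show ?thesis using True unfolding dist_of_def by (simp add: Suc_le_eq)
next
  case False
  then show ?thesis unfolding dist_of_def by simp
qed

lemma dist_tri: "dist_of M x z \<le> dist_of M x y + dist_of M y z"
proof (cases "Lrel x y \<and> Lrel y z")
  case True
  then have Lxz: "Lrel x z" using Lrel_trans by blast
  obtain ws1 where w1: "length ws1 = (LEAST n. Wd M x y n)" "set ws1 \<subseteq> M" "y = foldr (*) ws1 x"
    using Wd_least True unfolding Wd_def by blast
  obtain ws2 where w2: "length ws2 = (LEAST n. Wd M y z n)" "set ws2 \<subseteq> M" "z = foldr (*) ws2 y"
    using Wd_least True unfolding Wd_def by blast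
  have "Wd M x z (length (ws2 @ ws1))" unfolding Wd_def using w1 w2
    by (intro exI[of _ "ws2 @ ws1"]) (simp add: w1(2) w2(2) w2(3) w1(3))
  then have "(LEAST n. Wd M x z n) \<le> length (ws2 @ ws1)" by (rule Least_le)
  then have le: "(LEAST n. Wd M x z n) \<le> (LEAST n. Wd M x y n) + (LEAST n. Wd M y z n)"
    using w1(1) w2(1) by simp
  have "dist_of M x z = of_nat (LEAST n. Wd M x z n)" using Lxz by (simp add: dist_of_def)
  also have "\<dots> \<le> of_nat ((LEAST n. Wd M x y n) + (LEAST n. Wd M y z n))"
    using le by (simp only: of_nat_le_iff)
  also have "\<dots> = dist_of M x y + dist_of M y z" using True by (simp add: dist_of_def)
  finally show ?thesis .
next
  case False
  then show ?thesis unfolding dist_of_def by auto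
qed

lemma dist_rsub: "dist_of M (s * x) (t * x) \<le> dist_of M s t"
proof (cases "Lrel s t")
  case True
  obtain ws where w: "length ws = (LEAST n. Wd M s t n)" "set ws \<subseteq> M" "t = foldr (*) ws s"
    using Wd_least True unfolding Wd_def by blast
  have "Wd M (s * x) (t * x) (length ws)" unfolding Wd_def using w foldr_mult by metis
  then have le: "(LEAST n. Wd M (s * x) (t * x) n) \<le> (LEAST n. Wd M s t n)"
    unfolding w(1)[symmetric] by (rule Least_le)
  have "dist_of M (s * x) (t * x) = of_nat (LEAST n. Wd M (s * x) (t * x) n)"
    using True Lrel_right by (simp add: dist_of_def)
  also have "\<dots> \<le> of_nat (LEAST n. Wd M s t n)" using le by (simp only: of_nat_le_iff)
  also have "\<dots> = dist_of M s t" using True by (simp add: dist_of_def)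
  finally show ?thesis .
next
  case False
  then show ?thesis unfolding dist_of_def by simp
qed

lemma dist_fin: "dist_of M s t < \<infinity> \<longleftrightarrow> Lrel s t"
  unfolding dist_of_def by (simp add: of_nat_less_top)

lemma dist_proper:
  assumes "(r::real) \<ge> 0" "x \<noteq> y" "dist_of M x y \<le> ennreal r"
  shows "\<exists>fs. fs \<noteq> [] \<and> length fs \<le> nat \<lceil>r\<rceil> \<and> set fs \<subseteq> M \<and> y = lprod fs * x"
proof -
  have L: "Lrel x y" using assms(3) unfolding dist_of_def by (cases "Lrel x y") (simp_all add: top_unique)
  obtain ws where w: "length ws = (LEAST n. Wd M x y n)" "set ws \<subseteq> M" "y = foldr (*) ws x"
    using Wd_least L unfolding Wd_def by blast
  have "ennreal (real (length ws)) \<le> ennreal r"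
    using assms(3) L w(1) unfolding dist_of_def by (simp add: ennreal_of_nat_eq_real_of_nat)
  then have "real (length ws) \<le> r" using assms(1) by (simp add: ennreal_le_iff)
  then have "length ws \<le> nat \<lceil>r\<rceil>" by linarith
  moreover have "ws \<noteq> []" using w(3) assms(2) by auto
  ultimately show ?thesis using w lprod_foldr by metis
qed

end

lemma dir1:
  assumes "quasi_finitely_generated TYPE('a::inverse_semigroup)"
  shows "\<exists>d :: 'a \<Rightarrow> 'a \<Rightarrow> ennreal. ext_metric d \<and> uniformly_proper d \<and> right_subinvariant d \<and>
        uniformly_discrete d \<and> components_L_classes d"
proof -
  obtain M :: "'a set" where fM: "finite M" and Minv: "isinv ` M = M"
    and gen: "\<forall>s::'a. \<exists>ws. ws \<noteq> [] \<and> set ws \<subseteq> M \<union> idems \<and> s = lprod ws"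
    using assms unfolding quasi_finitely_generated_def by blast
  let ?d = "dist_of M"
  have "ext_metric ?d" unfolding ext_metric_def
    using dist_zero[OF Minv gen] dist_sym[OF Minv gen] dist_tri[OF Minv gen] by blast
  moreover have "uniformly_proper ?d" unfolding uniformly_proper_def
    using fM dist_proper[OF Minv gen] by blast
  moreover have "right_subinvariant ?d" unfolding right_subinvariant_def
    using dist_rsub[OF Minv gen] by blast
  moreover have "uniformly_discrete ?d" unfolding uniformly_discrete_def
  proof -
    have "1 \<le> (INF p \<in> {(s, t). s \<noteq> t}. ?d (fst p) (snd p))"
      using dist_ge1[OF Minv gen] by (auto intro!: INF_greatest)
    then show "0 < (INF p \<in> {(s, t). s \<noteq> t}. ?d (fst p) (snd p))"
      using zero_less_one order_less_le_trans by blast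
  qed
  moreover have "components_L_classes ?d" unfolding components_L_classes_def
    using dist_fin[OF Minv gen] by blast
  ultimately show ?thesis by blast
qed

lemma dir2:
  fixes d :: "'a::inverse_semigroup \<Rightarrow> 'a \<Rightarrow> ennreal"
  assumes up: "uniformly_proper d" and cl: "components_L_classes d"
  shows "quasi_finitely_generated TYPE('a)"
proof -
  obtain F1 :: "'a set" where fF: "finite F1" and F: "\<forall>r::real. r \<ge> 0 \<longrightarrow> (\<forall>x y. x \<noteq> y \<and> d x y \<le> ennreal r \<longrightarrow>
           (\<exists>fs. fs \<noteq> [] \<and> length fs \<le> nat \<lceil>r\<rceil> \<and> set fs \<subseteq> F1 \<and> y = lprod fs * x))"
    using up unfolding uniformly_proper_def by blast
  let ?M = "F1 \<union> isinv ` F1"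
  have "finite ?M" using fF by simp
  moreover have "isinv ` ?M = ?M"
  proof -
    have "isinv ` ?M = isinv ` F1 \<union> (\<lambda>x. isinv (isinv x)) ` F1" by (simp add: image_Un image_image)
    also have "\<dots> = isinv ` F1 \<union> F1" by (simp add: isinv_isinv)
    finally show ?thesis by (simp add: Un_commute)
  qed
  moreover have "\<exists>ws. ws \<noteq> [] \<and> set ws \<subseteq> ?M \<union> idems \<and> s = lprod ws" for s :: 'a
  proof -
    let ?e = "isinv s * s"
    have ee: "?e * ?e = ?e" by (rule idem_l)
    show ?thesis
    proof (cases "s = ?e")
      case True
      then have "s * s = s" using ee by simp
      then have "s \<in> idems" unfolding idems_def by simp
      then show ?thesis by (intro exI[of _ "[s]"]) auto
    next
      case False
      have "Lrel ?e s" unfolding Lrel_def using isinv_idem[OF ee] ee by simp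
      then have fin: "d ?e s < \<infinity>" using cl unfolding components_L_classes_def by blast
      let ?r = "enn2real (d ?e s)"
      have "d ?e s = ennreal ?r" using fin by (simp add: ennreal_enn2real_if)
      then have "d ?e s \<le> ennreal ?r" by simp
      moreover have "?r \<ge> 0" by simp
      ultimately have "\<exists>fs. fs \<noteq> [] \<and> length fs \<le> nat \<lceil>?r\<rceil> \<and> set fs \<subseteq> F1 \<and> s = lprod fs * ?e"
        using F[rule_format, of ?r ?e s] False by simp
      then obtain fs where fs: "fs \<noteq> []" "set fs \<subseteq> F1" "s = lprod fs * ?e"
        by blast
      have "s = lprod (fs @ [?e])" using fs lprod_snoc by metis
      moreover have "set (fs @ [?e]) \<subseteq> ?M \<union> idems" using fs ee by (auto simp: idems_def)
      ultimately show ?thesis by (intro exI[of _ "fs @ [?e]"]) simp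
    qed
  qed
  ultimately show ?thesis unfolding quasi_finitely_generated_def by blast
qed

theorem proposition3p4:
  shows "quasi_finitely_generated TYPE('a::inverse_semigroup) \<longleftrightarrow>
    (\<exists>d :: 'a \<Rightarrow> 'a \<Rightarrow> ennreal. ext_metric d \<and> uniformly_proper d \<and> right_subinvariant d \<and>
        uniformly_discrete d \<and> components_L_classes d)"
  using dir1 dir2 by blast

end
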